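(* Let $\mathbf{v}\in\mathbb{R}^n$ with $\|\mathbf{v}\|_1:=\sum_{k=1}^n|v_k|<1$ and let $s:=\sum_{k=1}^n v_k$. Then \[ 0\le\prod_{k=1}^n\frac{1}{1+v_k}-(1-s)\le\frac{\|\mathbf{v}\|_1^2}{1-\|\mathbf{v}\|_1} \] and \[ -\frac{\|\mathbf{v}\|_1^2}{(1-\|\mathbf{v}\|_1)^3}\Bigl(1+\tfrac14\|\mathbf{v}\|_1^2\Bigr)\le\prod_{k=1}^n(1+v_k)-(1+s)\le\frac{s^2}{1-s}. \] *)

theory Defs
  imports "HOL-Analysis.Analysis"
begin

end

theory Submission
  imports Defs
begin

lemma lemA:
  fixes f :: "'a \<Rightarrow> real"
  assumes "finite A" "\<forall>k\<in>A. \<bar>f k\<bar> < 1"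
  shows "\<bar>(\<Prod>k\<in>A. 1 / (1 + f k)) - (1 - sum f A)\<bar>
           \<le> (\<Prod>k\<in>A. 1 / (1 - \<bar>f k\<bar>)) - 1 - (\<Sum>k\<in>A. \<bar>f k\<bar>)"
  using assms
proof (induction A rule: finite_induct)
  case empty
  then show ?case by simp
next
  case (insert x A)
  define P where "P = (\<Prod>k\<in>A. 1 / (1 + f k))"
  define s where "s = sum f A"
  define Q where "Q = (\<Prod>k\<in>A. 1 / (1 - \<bar>f k\<bar>))"
  define N where "N = (\<Sum>k\<in>A. \<bar>f k\<bar>)"
  define v where "v = f x"
  define a where "a = \<bar>v\<bar>"
  define E where "E = P - (1 - s)"
  have IH: "\<bar>E\<bar> \<le> Q - 1 - N" using insert unfolding E_def P_def s_def Q_def N_def by auto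
  have a1: "a < 1" using insert unfolding a_def v_def by auto
  have sN: "\<bar>s\<bar> \<le> N" unfolding s_def N_def by (rule sum_abs)
  have v1: "1 + v > 0" "1 + v \<ge> 1 - a" using a1 unfolding a_def by auto
  have id: "P / (1 + v) - (1 - s - v) = s * v + (1 - s) * v\<^sup>2 / (1 + v) + E / (1 + v)"
  proof -
    define w where "w = inverse (1 + v)"
    have w1: "w * (1 + v) = 1" using v1 unfolding w_def by simp
    have "P * w - (1 - s - v) = s * v + (1 - s) * v\<^sup>2 * w + E * w"
      unfolding E_def using w1 by algebra
    then show ?thesis unfolding w_def by (simp add: divide_inverse)
  qed
  have t1: "\<bar>s * v\<bar> \<le> N * a" unfolding a_def abs_mult
    by (rule mult_right_mono[OF sN]) simp
  have t2: "\<bar>(1 - s) * v\<^sup>2 / (1 + v)\<bar> \<le> (1 + N) * a\<^sup>2 / (1 - a)"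
  proof -
    have "\<bar>(1 - s) * v\<^sup>2 / (1 + v)\<bar> = \<bar>1 - s\<bar> * a\<^sup>2 / (1 + v)"
      using v1 unfolding a_def by (simp add: abs_mult)
    also have "\<dots> \<le> (1 + N) * a\<^sup>2 / (1 + v)"
      using sN v1 by (intro divide_right_mono mult_right_mono) auto
    also have "\<dots> \<le> (1 + N) * a\<^sup>2 / (1 - a)"
      using v1 a1 sN by (intro divide_left_mono mult_nonneg_nonneg) auto
    finally show ?thesis .
  qed
  have t3: "\<bar>E / (1 + v)\<bar> \<le> (Q - 1 - N) / (1 - a)"
  proof -
    have "\<bar>E / (1 + v)\<bar> = \<bar>E\<bar> / (1 + v)" using v1 by simp
    also have "\<dots> \<le> (Q - 1 - N) / (1 + v)" using IH v1 by (intro divide_right_mono) auto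
    also have "\<dots> \<le> (Q - 1 - N) / (1 - a)"
      using v1 a1 IH by (intro divide_left_mono) auto
    finally show ?thesis .
  qed
  have "\<bar>P / (1 + v) - (1 - s - v)\<bar> \<le> N * a + (1 + N) * a\<^sup>2 / (1 - a) + (Q - 1 - N) / (1 - a)"
    unfolding id using t1 t2 t3 by linarith
  also have "\<dots> = Q / (1 - a) - 1 - N - a"
  proof -
    define w where "w = inverse (1 - a)"
    have w1: "w * (1 - a) = 1" using a1 unfolding w_def by simp
    have "N * a + (1 + N) * a\<^sup>2 * w + (Q - 1 - N) * w = Q * w - 1 - N - a"
      using w1 by algebra
    then show ?thesis unfolding w_def by (simp add: divide_inverse)
  qed
  finally have "\<bar>P / (1 + v) - (1 - s - v)\<bar> \<le> Q / (1 - a) - 1 - N - a" .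
  then show ?case using insert
    unfolding P_def s_def Q_def N_def a_def v_def
    by (simp add: algebra_simps)
qed

lemma lemB:
  fixes a :: "'a \<Rightarrow> real"
  assumes "finite A" "\<forall>k\<in>A. 0 \<le> a k \<and> a k \<le> 1"
  shows "1 - sum a A \<le> (\<Prod>k\<in>A. 1 - a k)"
  using assms
proof (induction A rule: finite_induct)
  case empty
  then show ?case by simp
next
  case (insert x A)
  then have h: "1 - sum a A \<le> (\<Prod>k\<in>A. 1 - a k)" "0 \<le> a x" "a x \<le> 1" "0 \<le> sum a A"
    by (auto intro: sum_nonneg)
  have "1 - a x - sum a A \<le> (1 - a x) * (1 - sum a A)" using h by (simp add: algebra_simps)
  also have "\<dots> \<le> (1 - a x) * (\<Prod>k\<in>A. 1 - a k)" using h by (intro mult_left_mono) auto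
  finally show ?case using insert by simp
qed

lemma lemC:
  fixes f :: "'a \<Rightarrow> real"
  assumes "finite A"
  shows "\<bar>(\<Prod>k\<in>A. 1 + f k) - (1 + sum f A)\<bar>
           \<le> (\<Prod>k\<in>A. 1 + \<bar>f k\<bar>) - 1 - (\<Sum>k\<in>A. \<bar>f k\<bar>)"
  using assms
proof (induction A rule: finite_induct)
  case empty
  then show ?case by simp
next
  case (insert x A)
  define P where "P = (\<Prod>k\<in>A. 1 + f k)"
  define s where "s = sum f A"
  define R where "R = (\<Prod>k\<in>A. 1 + \<bar>f k\<bar>)"
  define N where "N = (\<Sum>k\<in>A. \<bar>f k\<bar>)"
  define v where "v = f x"
  define a where "a = \<bar>v\<bar>"
  define E where "E = P - (1 + s)"
  have IH: "\<bar>E\<bar> \<le> R - 1 - N" using insert unfolding E_def P_def s_def R_def N_def by auto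
  have sN: "\<bar>s\<bar> \<le> N" unfolding s_def N_def by (rule sum_abs)
  have id: "P * (1 + v) - (1 + s + v) = s * v + E * (1 + v)"
    unfolding E_def by (simp add: algebra_simps)
  have t1: "\<bar>s * v\<bar> \<le> N * a" unfolding a_def abs_mult
    by (rule mult_right_mono[OF sN]) simp
  have t2: "\<bar>E * (1 + v)\<bar> \<le> (R - 1 - N) * (1 + a)"
    unfolding abs_mult using IH by (intro mult_mono) (auto simp: a_def)
  have "\<bar>P * (1 + v) - (1 + s + v)\<bar> \<le> (R * (1 + a)) - 1 - N - a"
    unfolding id using t1 t2 by (simp add: algebra_simps)
  then show ?case using insert
    unfolding P_def s_def R_def N_def a_def v_def
    by (simp add: algebra_simps)
qed

lemma exp_bound:
  fixes s :: real
  assumes "s < 1"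
  shows "exp s - (1 + s) \<le> s\<^sup>2 / (1 - s)"
proof -
  have "1 - s \<le> exp (-s)" using exp_ge_add_one_self[of "-s"] by simp
  then have "exp s \<le> 1 / (1 - s)" using assms
    by (simp add: exp_minus field_simps)
  also have "1 / (1 - s) = 1 + s + s\<^sup>2 / (1 - s)" using assms
    by (simp add: field_simps power2_eq_square)
  finally show ?thesis by simp
qed

theorem lemma7:
  fixes v :: "real ^ 'n"
  defines "N \<equiv> (\<Sum>k\<in>UNIV. \<bar>v $ k\<bar>)"
      and "s \<equiv> (\<Sum>k\<in>UNIV. v $ k)"
  assumes "N < 1"
  shows "0 \<le> (\<Prod>k\<in>UNIV. 1 / (1 + v $ k)) - (1 - s)
         \<and> (\<Prod>k\<in>UNIV. 1 / (1 + v $ k)) - (1 - s) \<le> N\<^sup>2 / (1 - N)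
         \<and> - (N\<^sup>2 / (1 - N) ^ 3) * (1 + N\<^sup>2 / 4) \<le> (\<Prod>k\<in>UNIV. 1 + v $ k) - (1 + s)
         \<and> (\<Prod>k\<in>UNIV. 1 + v $ k) - (1 + s) \<le> s\<^sup>2 / (1 - s)"
proof -
  have le: "\<bar>v $ k\<bar> \<le> N" for k
    unfolding N_def by (rule member_le_sum) auto
  have lt: "\<bar>v $ k\<bar> < 1" for k using le[of k] assms by linarith
  have N0: "0 \<le> N" unfolding N_def by (simp add: sum_nonneg)
  have sN: "\<bar>s\<bar> \<le> N" unfolding s_def N_def by (rule sum_abs)
  have s1: "s < 1" using sN assms by linarith
  have pos: "0 < 1 + v $ k" for k using lt[of k] by linarith
  define Q where "Q = (\<Prod>k\<in>UNIV. 1 / (1 - \<bar>v $ k\<bar>))"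
  have Qeq: "Q = 1 / (\<Prod>k\<in>UNIV. 1 - \<bar>v $ k\<bar>)"
    unfolding Q_def by (simp add: prod_dividef)
  have W: "1 - N \<le> (\<Prod>k\<in>UNIV. 1 - \<bar>v $ k\<bar>)"
    unfolding N_def using lemB[of UNIV "\<lambda>k. \<bar>v $ k\<bar>"] lt by (auto simp: less_imp_le)
  have QN: "Q \<le> 1 / (1 - N)" unfolding Qeq using W assms
    by (intro divide_left_mono) auto
  have NN: "1 / (1 - N) - 1 - N = N\<^sup>2 / (1 - N)" using assms
    by (simp add: field_simps power2_eq_square)
  have p1: "0 \<le> (\<Prod>k\<in>UNIV. 1 / (1 + v $ k)) - (1 - s)"
  proof -
    have "(\<Prod>k\<in>UNIV. exp (- v $ k)) \<le> (\<Prod>k\<in>UNIV. 1 / (1 + v $ k))"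
    proof (rule prod_mono, safe)
      fix k
      have "1 + v $ k \<le> exp (v $ k)" by (rule exp_ge_add_one_self)
      then show "exp (- v $ k) \<le> 1 / (1 + v $ k)" using pos[of k]
        by (simp add: exp_minus field_simps)
    qed simp
    moreover have "(\<Prod>k\<in>UNIV. exp (- v $ k)) = exp (- s)"
      unfolding s_def by (simp add: exp_sum[symmetric] sum_negf)
    moreover have "1 - s \<le> exp (- s)" using exp_ge_add_one_self[of "-s"] by simp
    ultimately show ?thesis by linarith
  qed
  have p2: "(\<Prod>k\<in>UNIV. 1 / (1 + v $ k)) - (1 - s) \<le> N\<^sup>2 / (1 - N)"
    using lemA[of UNIV "\<lambda>k. v $ k"] lt QN NN unfolding Q_def N_def s_def by auto
  have p3: "- (N\<^sup>2 / (1 - N) ^ 3) * (1 + N\<^sup>2 / 4) \<le> (\<Prod>k\<in>UNIV. 1 + v $ k) - (1 + s)"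
  proof -
    have R: "(\<Prod>k\<in>UNIV. 1 + \<bar>v $ k\<bar>) \<le> Q"
      unfolding Q_def
    proof (rule prod_mono, safe)
      fix k
      have "(1 + \<bar>v $ k\<bar>) * (1 - \<bar>v $ k\<bar>) \<le> 1" by (simp add: algebra_simps)
      then show "1 + \<bar>v $ k\<bar> \<le> 1 / (1 - \<bar>v $ k\<bar>)" using lt[of k]
        by (simp add: field_simps)
    qed simp
    have C: "\<bar>(\<Prod>k\<in>UNIV. 1 + v $ k) - (1 + s)\<bar> \<le> N\<^sup>2 / (1 - N)"
      using lemC[of UNIV "\<lambda>k. v $ k"] R QN NN unfolding N_def s_def by auto
    have d: "0 < 1 - N" "1 - N \<le> 1" using assms N0 by auto
    have "(1 - N) ^ 3 \<le> (1 - N)"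
    proof -
      have "(1 - N)^2 \<le> 1" using d by (simp add: power_le_one)
      then have "(1 - N)^2 * (1 - N) \<le> 1 * (1 - N)" using d by (intro mult_right_mono) auto
      then show ?thesis by (simp add: power3_eq_cube power2_eq_square)
    qed
    then have "N\<^sup>2 / (1 - N) \<le> N\<^sup>2 / (1 - N) ^ 3"
      using d by (intro divide_left_mono) auto
    also have "\<dots> \<le> N\<^sup>2 / (1 - N) ^ 3 * (1 + N\<^sup>2 / 4)"
      using mult_left_mono[of 1 "1 + N\<^sup>2 / 4" "N\<^sup>2 / (1 - N) ^ 3"] d by simp
    finally show ?thesis using C by linarith
  qed
  have p4: "(\<Prod>k\<in>UNIV. 1 + v $ k) - (1 + s) \<le> s\<^sup>2 / (1 - s)"
  proof -
    have "(\<Prod>k\<in>UNIV. 1 + v $ k) \<le> (\<Prod>k\<in>UNIV. exp (v $ k))"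
      using pos by (intro prod_mono) (auto intro: exp_ge_add_one_self less_imp_le)
    also have "\<dots> = exp s" unfolding s_def by (simp add: exp_sum)
    finally show ?thesis using exp_bound[OF s1] by linarith
  qed
  show ?thesis using p1 p2 p3 p4 by blast
qed

end
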